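(* Let $k_1,k_2$ be positive integers with $1\le k_1\le k_2$ and let $p$ be an odd prime with $p\equiv 1\pmod{k_1+k_2}$. Let $M=[-k_1,k_2]^\ast$, viewed as a subset of the multiplicative group $\mathbb{Z}_p^\ast$. Then $M$ is a direct factor of $\mathbb{Z}_p^\ast$ if and only if $M$ is a direct factor of the subgroup $H=\langle -1,2,\dots,k_2\rangle$ of $\mathbb{Z}_p^\ast$.
   Context: $\mathbb{Z}_p^\ast=\mathbb{Z}_p\setminus\{0\}$ is the multiplicative group of nonzero residues modulo the prime $p$; $[a,b]^\ast=\{a,a+1,\dots,b\}\setminus\{0\}$. $\langle -1,2,\dots,k_2\rangle$ is the subgroup of $\mathbb{Z}_p^\ast$ generated by $-1,2,\dots,k_2$. For a (multiplicative) abelian group $G$ and a nonempty subset $A\subseteq G$, $A$ is a direct factor of $G$ if there is a subset $C\subseteq G$ such that every element $g\in G$ can be written uniquely as $g=ac$ with $a\in A$, $c\in C$ (a factorization $G=AC$). *)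

theory Defs
  imports "HOL-Number_Theory.Residues" "HOL-Algebra.Multiplicative_Group" "HOL-Algebra.Generated_Groups"
begin

definition Zp_star :: "nat \<Rightarrow> int monoid" where
  "Zp_star p = mult_of (residue_ring (int p))"

definition direct_factor :: "('a, 'b) monoid_scheme \<Rightarrow> 'a set \<Rightarrow> bool" where
  "direct_factor G A \<longleftrightarrow> A \<noteq> {} \<and> A \<subseteq> carrier G \<and>
     (\<exists>C \<subseteq> carrier G. \<forall>g \<in> carrier G. \<exists>!ac. fst ac \<in> A \<and> snd ac \<in> C \<and> g = fst ac \<otimes>\<^bsub>G\<^esub> snd ac)"

definition interval_star_mod :: "nat \<Rightarrow> int \<Rightarrow> int \<Rightarrow> int set" where
  "interval_star_mod p a b = (\<lambda>i. i mod int p) ` ({a..b} - {0})"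

definition H_sub :: "nat \<Rightarrow> nat \<Rightarrow> int monoid" where
  "H_sub p k2 = (Zp_star p)\<lparr>carrier := generate (Zp_star p) ((\<lambda>i. i mod int p) ` ({-1} \<union> {2..int k2}))\<rparr>"

end

theory Submission
  imports Defs
begin

lemma (in group) df_sub_fwd:
  assumes H: "subgroup H G" and AH: "A \<subseteq> H" and df: "direct_factor G A"
  shows "direct_factor (G\<lparr>carrier := H\<rparr>) A"
proof -
  from df obtain C where C: "C \<subseteq> carrier G"
    and u: "\<forall>g \<in> carrier G. \<exists>!ac. fst ac \<in> A \<and> snd ac \<in> C \<and> g = fst ac \<otimes> snd ac"
    and ne: "A \<noteq> {}" unfolding direct_factor_def by auto
  have HG: "H \<subseteq> carrier G" using H subgroup.subset by blast
  have "\<forall>g \<in> H. \<exists>!ac. fst ac \<in> A \<and> snd ac \<in> C \<inter> H \<and> g = fst ac \<otimes> snd ac"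
  proof
    fix g assume g: "g \<in> H"
    have gG: "g \<in> carrier G" using g HG by blast
    have "\<exists>!ac. fst ac \<in> A \<and> snd ac \<in> C \<and> g = fst ac \<otimes> snd ac" using u gG by blast
    then obtain ac where acP: "fst ac \<in> A \<and> snd ac \<in> C \<and> g = fst ac \<otimes> snd ac"
      and un: "\<forall>y. fst y \<in> A \<and> snd y \<in> C \<and> g = fst y \<otimes> snd y \<longrightarrow> y = ac"
      by (rule ex1E)
    have a: "fst ac \<in> H" using acP AH by blast
    have aG: "fst ac \<in> carrier G" using a HG by blast
    have cG: "snd ac \<in> carrier G" using acP C by blast
    have "snd ac = inv (fst ac) \<otimes> g"
      using inv_solve_left[OF cG aG gG] acP by simp
    hence cH: "snd ac \<in> H" using a g H by (simp add: subgroup.m_closed subgroup.m_inv_closed)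
    show "\<exists>!ac. fst ac \<in> A \<and> snd ac \<in> C \<inter> H \<and> g = fst ac \<otimes> snd ac"
    proof (rule ex1I[of _ ac])
      show "fst ac \<in> A \<and> snd ac \<in> C \<inter> H \<and> g = fst ac \<otimes> snd ac" using acP cH by blast
    next
      fix y assume "fst y \<in> A \<and> snd y \<in> C \<inter> H \<and> g = fst y \<otimes> snd y"
      thus "y = ac" using un by blast
    qed
  qed
  hence "\<exists>C'\<subseteq>carrier (G\<lparr>carrier := H\<rparr>). \<forall>g \<in> carrier (G\<lparr>carrier := H\<rparr>). \<exists>!ac. fst ac \<in> A \<and> snd ac \<in> C' \<and> g = fst ac \<otimes>\<^bsub>G\<lparr>carrier := H\<rparr>\<^esub> snd ac"
    by (intro exI[of _ "C \<inter> H"] conjI) simp_all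
  thus ?thesis using ne AH unfolding direct_factor_def by (intro conjI) simp_all
qed

lemma (in group) df_sub_bwd:
  assumes H: "subgroup H G" and AH: "A \<subseteq> H" and df: "direct_factor (G\<lparr>carrier := H\<rparr>) A"
  shows "direct_factor G A"
proof -
  have HG: "H \<subseteq> carrier G" using H subgroup.subset by blast
  from df obtain D where D: "D \<subseteq> H"
    and u: "\<forall>g \<in> H. \<exists>!ac. fst ac \<in> A \<and> snd ac \<in> D \<and> g = fst ac \<otimes> snd ac"
    and ne: "A \<noteq> {}" unfolding direct_factor_def by auto
  define E where "E x = {r \<in> carrier G. x \<otimes> inv r \<in> H}" for x
  define rep where "rep x = (SOME r. r \<in> E x)" for x
  have repE: "rep x \<in> E x" if "x \<in> carrier G" for x
  proof -
    have "x \<in> E x" using that H by (simp add: E_def subgroup.one_closed)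
    thus ?thesis unfolding rep_def by (rule someI)
  qed
  have mulH: "u \<otimes> inv r \<in> H" if "u \<in> carrier G" "v \<in> carrier G" "r \<in> carrier G"
        "u \<otimes> inv v \<in> H" "v \<otimes> inv r \<in> H" for u v r
  proof -
    have h: "inv v \<otimes> (v \<otimes> inv r) = inv r" using that by (simp add: m_assoc[symmetric])
    have e: "u \<otimes> inv r = (u \<otimes> inv v) \<otimes> (v \<otimes> inv r)" using that by (simp add: m_assoc h)
    show ?thesis unfolding e by (rule subgroup.m_closed[OF H that(4) that(5)])
  qed
  have symH: "y \<otimes> inv x \<in> H" if "x \<in> carrier G" "y \<in> carrier G" "x \<otimes> inv y \<in> H" for x y
  proof -
    have "inv (x \<otimes> inv y) = y \<otimes> inv x" using that by (simp add: inv_mult_group)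
    with subgroup.m_inv_closed[OF H that(3)] show ?thesis by simp
  qed
  have Eeq: "E x = E y" if "x \<in> carrier G" "y \<in> carrier G" "x \<otimes> inv y \<in> H" for x y
  proof -
    have yx: "y \<otimes> inv x \<in> H" using symH that by blast
    have "r \<in> E x \<longleftrightarrow> r \<in> E y" for r
      unfolding E_def using mulH[of x y r] mulH[of y x r] that yx by auto
    thus ?thesis by blast
  qed
  define C where "C = {d \<otimes> rep x | d x. d \<in> D \<and> x \<in> carrier G}"
  have repG: "rep x \<in> carrier G" if "x \<in> carrier G" for x using repE[OF that] by (simp add: E_def)
  have repH: "x \<otimes> inv (rep x) \<in> H" if "x \<in> carrier G" for x using repE[OF that] by (simp add: E_def)
  have CG: "C \<subseteq> carrier G" unfolding C_def using D HG repG by auto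
  have "\<forall>g \<in> carrier G. \<exists>!ac. fst ac \<in> A \<and> snd ac \<in> C \<and> g = fst ac \<otimes> snd ac"
  proof
    fix g assume g: "g \<in> carrier G"
    have h: "g \<otimes> inv (rep g) \<in> H" using repH[OF g] .
    have "\<exists>!ad. fst ad \<in> A \<and> snd ad \<in> D \<and> g \<otimes> inv (rep g) = fst ad \<otimes> snd ad" using u h by blast
    then obtain ad where ad: "fst ad \<in> A \<and> snd ad \<in> D \<and> g \<otimes> inv (rep g) = fst ad \<otimes> snd ad"
      and un: "\<forall>y. fst y \<in> A \<and> snd y \<in> D \<and> g \<otimes> inv (rep g) = fst y \<otimes> snd y \<longrightarrow> y = ad"
      by (rule ex1E)
    have aG: "fst ad \<in> carrier G" using ad AH HG by blast
    have dG: "snd ad \<in> carrier G" using ad D HG by blast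
    have rg: "rep g \<in> carrier G" using repG[OF g] .
    have gr: "g = fst ad \<otimes> (snd ad \<otimes> rep g)"
    proof -
      have "g = (g \<otimes> inv (rep g)) \<otimes> rep g" using g rg by (simp add: m_assoc)
      also have "\<dots> = fst ad \<otimes> (snd ad \<otimes> rep g)" using ad aG dG rg by (simp add: m_assoc)
      finally show ?thesis .
    qed
    have inC: "snd ad \<otimes> rep g \<in> C" unfolding C_def using ad g by blast
    show "\<exists>!ac. fst ac \<in> A \<and> snd ac \<in> C \<and> g = fst ac \<otimes> snd ac"
    proof (rule ex1I[of _ "(fst ad, snd ad \<otimes> rep g)"])
      show "fst (fst ad, snd ad \<otimes> rep g) \<in> A \<and> snd (fst ad, snd ad \<otimes> rep g) \<in> C \<and>
        g = fst (fst ad, snd ad \<otimes> rep g) \<otimes> snd (fst ad, snd ad \<otimes> rep g)"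
        using ad inC gr by simp
    next
      fix ac assume ac: "fst ac \<in> A \<and> snd ac \<in> C \<and> g = fst ac \<otimes> snd ac"
      then obtain d x where dx: "d \<in> D" "x \<in> carrier G" "snd ac = d \<otimes> rep x" unfolding C_def by blast
      have a'G: "fst ac \<in> carrier G" using ac AH HG by blast
      have d'G: "d \<in> carrier G" using dx D HG by blast
      have rx: "rep x \<in> carrier G" using repG[OF dx(2)] .
      have g2: "g \<otimes> inv (rep x) = fst ac \<otimes> d"
        using ac dx a'G d'G rx by (simp add: m_assoc)
      have "fst ac \<otimes> d \<in> H" using ac AH dx D subgroup.m_closed[OF H] by blast
      hence g3: "g \<otimes> inv (rep x) \<in> H" using g2 by simp
      have "x \<otimes> inv (rep x) \<in> H" using repH[OF dx(2)] .
      hence "rep x \<otimes> inv x \<in> H" using symH[OF dx(2) rx] by blast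
      hence "g \<otimes> inv x \<in> H" using mulH[OF g rx dx(2) g3] by blast
      hence "E g = E x" using Eeq[OF g dx(2)] by simp
      hence rr: "rep x = rep g" unfolding rep_def by simp
      have "(fst ac, d) = ad" by (rule un[rule_format]) (use ac dx g2 rr in simp)
      hence "fst ac = fst ad" "d = snd ad" by auto
      thus "ac = (fst ad, snd ad \<otimes> rep g)" using dx rr by (metis prod.collapse)
    qed
  qed
  note P = this
  have "\<exists>C'\<subseteq>carrier G. \<forall>g \<in> carrier G. \<exists>!ac. fst ac \<in> A \<and> snd ac \<in> C' \<and> g = fst ac \<otimes> snd ac"
    by (rule exI[of _ C], rule conjI[OF CG P])
  moreover have "A \<subseteq> carrier G" using AH HG by blast
  ultimately show ?thesis using ne unfolding direct_factor_def by (intro conjI)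
qed

lemma df_sub:
  assumes "group G" "subgroup H G" "A \<subseteq> H"
  shows "direct_factor G A \<longleftrightarrow> direct_factor (G\<lparr>carrier := H\<rparr>) A"
  using group.df_sub_fwd[OF assms] group.df_sub_bwd[OF assms] by blast

theorem theorem4p1:
  fixes k1 k2 p :: nat
  assumes "1 \<le> k1" and "k1 \<le> k2"
    and "prime p" and "odd p"
    and "[p = 1] (mod (k1 + k2))"
  shows "direct_factor (Zp_star p) (interval_star_mod p (- int k1) (int k2))
     \<longleftrightarrow> direct_factor (H_sub p k2) (interval_star_mod p (- int k1) (int k2))"
proof -
  define G where "G = Zp_star p"
  have rp: "residues_prime p" using assms(3) by (simp add: residues_prime_def)
  have "field (residue_ring (int p))" using residues_prime.is_field[OF rp] by simp
  hence grp: "group G" unfolding G_def Zp_star_def by (rule field.field_mult_group)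
  have carG: "carrier G = {1..int p - 1}" unfolding G_def Zp_star_def residue_ring_def by auto
  have multG: "x \<otimes>\<^bsub>G\<^esub> y = (x * y) mod int p" for x y
    unfolding G_def Zp_star_def residue_ring_def mult_of_def by simp
  have oneG: "\<one>\<^bsub>G\<^esub> = 1" unfolding G_def Zp_star_def residue_ring_def mult_of_def by simp
  have "p mod (k1 + k2) = 1 mod (k1 + k2)" using assms(5) by (simp add: cong_def)
  moreover have "1 mod (k1 + k2) = 1" using assms(1,2) by simp
  ultimately have pm: "p mod (k1 + k2) = 1" by simp
  have "p \<noteq> 1" using assms(3) by auto
  define q where "q = p div (k1 + k2)"
  have q: "p = (k1 + k2) * q + 1" using pm unfolding q_def by (metis div_mult_mod_eq add.commute mult.commute)
  have "q \<noteq> 0" using \<open>p \<noteq> 1\<close> q by (cases q) auto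
  hence "(k1 + k2) * q \<ge> k1 + k2" by simp
  hence pgt: "p > k1 + k2" using q by linarith
  have inG: "i mod int p \<in> carrier G" if "i \<noteq> 0" "- int p < i" "i < int p" for i
  proof -
    have "\<not> int p dvd i" using dvd_imp_le_int[of i "int p"] that by auto
    hence "i mod int p \<noteq> 0" by (simp add: mod_eq_0_iff_dvd)
    moreover have "0 \<le> i mod int p" "i mod int p < int p" using pgt by auto
    ultimately show ?thesis unfolding carG by auto
  qed
  define S where "S = (\<lambda>i. i mod int p) ` ({-1} \<union> {2..int k2})"
  have SG: "S \<subseteq> carrier G" unfolding S_def
  proof (rule image_subsetI)
    fix i assume "i \<in> {-1} \<union> {2..int k2}"
    thus "i mod int p \<in> carrier G" using pgt assms(1) by (intro inG) auto
  qed
  have sub: "subgroup (generate G S) G" using group.generate_is_subgroup[OF grp SG] .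
  have HS: "H_sub p k2 = G\<lparr>carrier := generate G S\<rparr>" unfolding H_sub_def G_def S_def by simp
  have MS: "interval_star_mod p (- int k1) (int k2) \<subseteq> generate G S"
  proof
    fix y assume "y \<in> interval_star_mod p (- int k1) (int k2)"
    then obtain i where i: "i \<in> {- int k1..int k2}" "i \<noteq> 0" "y = i mod int p"
      unfolding interval_star_mod_def by blast
    consider "i = 1" | "i \<ge> 2" | "i = -1" | "i \<le> -2" using i(2) by linarith
    thus "y \<in> generate G S"
    proof cases
      case 1
      have "y = \<one>\<^bsub>G\<^esub>" using 1 i oneG pgt by simp
      thus ?thesis by (simp add: generate.one)
    next
      case 2
      hence "y \<in> S" using i unfolding S_def by auto
      thus ?thesis by (rule generate.incl)
    next
      case 3
      hence "y \<in> S" using i unfolding S_def by auto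
      thus ?thesis by (rule generate.incl)
    next
      case 4
      have a: "(-1) mod int p \<in> generate G S" by (rule generate.incl) (simp add: S_def)
      have b: "(-i) mod int p \<in> generate G S" using 4 i assms(2) by (intro generate.incl) (auto simp: S_def)
      have "y = ((-1) mod int p) \<otimes>\<^bsub>G\<^esub> ((-i) mod int p)"
        unfolding multG i(3) by (simp add: mod_mult_eq)
      thus ?thesis using generate.eng[OF a b] by simp
    qed
  qed
  show ?thesis unfolding HS G_def[symmetric] using df_sub[OF grp sub MS] .
qed

end
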